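(* Let $\hat K_4$ denote $K_4$ with one edge deleted, and let $Q = K_1 + \hat K_4 + C_5 + C_5 + C_5 + C_5$ (Zykov sum of a single vertex, $\hat K_4$, and four disjoint $5$-cycles). Let $w$ be the vertex of $K_1$ and let $a,b$ be the two non-adjacent vertices of $\hat K_4$. Consider a coloring of the edges of $Q$ in three colors such that the set of edges joining $w$ to the vertices of $\hat K_4$ contains edges of all three colors, and the edges $wa$ and $wb$ have different colors. Then there is a monochromatic triangle in this coloring.
   Context: All graphs are finite, undirected, without loops or multiple edges. The Zykov sum $G_1+G_2$ of two vertex-disjoint graphs is obtained by joining every vertex of $G_1$ to every vertex of $G_2$. *)

theory Defs
  imports Main
begin

text \<open>QW is the vertex w of K1; QK i (i < 4) are the vertices of K4-hat, where
  QK 0 = a and QK 1 = b are the two non-adjacent ones; QC i j (i < 4, j < 5)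
  is vertex j of the i-th 5-cycle (j adjacent to j+1 mod 5).\<close>

datatype qv = QW | QK nat | QC nat nat

definition Q_verts :: "qv set" where
  "Q_verts = {QW} \<union> {QK i | i. i < 4} \<union> {QC i j | i j. i < 4 \<and> j < 5}"

fun part :: "qv \<Rightarrow> nat" where
  "part QW = 0"
| "part (QK i) = 1"
| "part (QC i j) = i + 2"

fun inner_adj :: "qv \<Rightarrow> qv \<Rightarrow> bool" where
  "inner_adj (QK i) (QK k) = (i \<noteq> k \<and> {i, k} \<noteq> {0, 1})"
| "inner_adj (QC i j) (QC i' j') = (i = i' \<and> ((j + 1) mod 5 = j' \<or> (j' + 1) mod 5 = j))"
| "inner_adj _ _ = False"

definition Q_adj :: "qv \<Rightarrow> qv \<Rightarrow> bool" where
  "Q_adj x y = (x \<in> Q_verts \<and> y \<in> Q_verts \<and>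
     (if part x = part y then inner_adj x y else True))"

definition edge_3col :: "(qv \<Rightarrow> qv \<Rightarrow> nat) \<Rightarrow> bool" where
  "edge_3col c = (\<forall>x y. Q_adj x y \<longrightarrow> c x y = c y x \<and> c x y < 3)"

definition mono_triangle :: "(qv \<Rightarrow> qv \<Rightarrow> nat) \<Rightarrow> bool" where
  "mono_triangle c = (\<exists>x y z. Q_adj x y \<and> Q_adj y z \<and> Q_adj x z \<and>
     c x y = c y z \<and> c x y = c x z)"

end

theory Submission
  imports Defs
begin

lemma all5: "(\<forall>t<5. P t) = (P (0::nat) \<and> P 1 \<and> P 2 \<and> P 3 \<and> P 4)"
  by (auto simp: less_Suc_eq numeral_eq_Suc)

lemma lt3: "((x::nat) < 3) = (x = 0 \<or> x = 1 \<or> x = 2)" by auto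

definition cpick :: "(nat \<Rightarrow> nat) \<Rightarrow> nat \<Rightarrow> nat list" where
  "cpick k i = (if k 0 = i \<and> k 1 = i then [0,1] else if k 1 = i \<and> k 2 = i then [1,2]
     else if k 2 = i \<and> k 3 = i then [2,3] else if k 3 = i \<and> k 4 = i then [3,4]
     else if k 4 = i \<and> k 0 = i then [4,0] else if k 0 = i then [0] else if k 1 = i then [1]
     else if k 2 = i then [2] else if k 3 = i then [3] else if k 4 = i then [4] else [])"

lemma cpick_set: "t \<in> set (cpick k i) \<Longrightarrow> t < 5 \<and> k t = i"
  by (auto simp: cpick_def split: if_splits)

lemma cpick_distinct: "distinct (cpick k i)"
  by (simp add: cpick_def)

lemma cpick_adj: "s \<in> set (cpick k i) \<Longrightarrow> t \<in> set (cpick k i) \<Longrightarrow> s \<noteq> t \<Longrightarrow> (s+1) mod 5 = t \<or> (t+1) mod 5 = s"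
  by (auto simp: cpick_def split: if_splits)

lemma cpick_full: "\<forall>t<5. k t = i \<Longrightarrow> length (cpick k i) = 2"
  by (simp add: cpick_def all5)

lemma cpick_count: assumes "\<forall>t<5. k t < 3"
  shows "(\<exists>i<3. \<forall>t<5. k t = i) \<or> 3 \<le> length (cpick k 0) + length (cpick k 1) + length (cpick k 2)"
proof -
  have "k 0 < 3" "k 1 < 3" "k 2 < 3" "k 3 < 3" "k 4 < 3" using assms by auto
  then show ?thesis unfolding lt3 all5
    by (elim disjE; simp add: cpick_def)
qed

definition kl :: "(qv \<Rightarrow> qv \<Rightarrow> nat) \<Rightarrow> nat \<Rightarrow> nat list" where
  "kl c i = filter (\<lambda>t. c QW (QK t) = i) [0,1,2,3]"

lemma kl_count: assumes "c QW (QK 0) < 3" "c QW (QK 1) < 3" "c QW (QK 2) < 3" "c QW (QK 3) < 3"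
  shows "length (kl c 0) + length (kl c 1) + length (kl c 2) = 4"
  using assms unfolding lt3 by (elim disjE; simp add: kl_def)

lemma kl_nonempty: "t < 4 \<Longrightarrow> c QW (QK t) = i \<Longrightarrow> 1 \<le> length (kl c i)"
proof -
  assume "t < 4" "c QW (QK t) = i"
  then have "t \<in> set (kl c i)" by (auto simp: kl_def less_Suc_eq numeral_eq_Suc)
  then show ?thesis by (cases "kl c i") auto
qed


lemma QW_adj: "x \<in> Q_verts \<Longrightarrow> x \<noteq> QW \<Longrightarrow> Q_adj QW x \<and> Q_adj x QW"
  by (cases x) (auto simp: Q_adj_def Q_verts_def)

lemma QK_in: "t < 4 \<Longrightarrow> QK t \<in> Q_verts" by (auto simp: Q_verts_def)
lemma QC_in: "j < 4 \<Longrightarrow> t < 5 \<Longrightarrow> QC j t \<in> Q_verts" by (auto simp: Q_verts_def)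

lemma col_lt3: "edge_3col c \<Longrightarrow> x \<in> Q_verts \<Longrightarrow> x \<noteq> QW \<Longrightarrow> c QW x < 3"
  using QW_adj edge_3col_def by blast

lemma no_same:
  assumes "edge_3col c" "\<not> mono_triangle c" "x \<in> Q_verts" "x \<noteq> QW" "y \<in> Q_verts" "y \<noteq> QW"
    "Q_adj x y" "c QW x = i" "c QW y = i"
  shows "c x y < 3 \<and> c x y \<noteq> i"
proof
  show "c x y < 3" using assms(1,7) edge_3col_def by blast
  show "c x y \<noteq> i"
  proof
    assume "c x y = i"
    then have "Q_adj QW x \<and> Q_adj x y \<and> Q_adj QW y \<and> c QW x = c x y \<and> c QW x = c QW y"
      using QW_adj assms by auto
    then have "mono_triangle c" unfolding mono_triangle_def by blast
    then show False using assms(2) by blast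
  qed
qed

definition cliq :: "(qv \<Rightarrow> qv \<Rightarrow> nat) \<Rightarrow> nat \<Rightarrow> qv list \<Rightarrow> bool" where
  "cliq c i L = (distinct L \<and> (\<forall>x\<in>set L. x \<in> Q_verts \<and> x \<noteq> QW \<and> c QW x = i)
     \<and> (\<forall>x\<in>set L. \<forall>y\<in>set L. x \<noteq> y \<longrightarrow> Q_adj x y))"

definition cl :: "(qv \<Rightarrow> qv \<Rightarrow> nat) \<Rightarrow> nat \<Rightarrow> nat \<Rightarrow> qv list" where
  "cl c i j = map (QC j) (cpick (\<lambda>t. c QW (QC j t)) i)"

definition LL :: "(qv \<Rightarrow> qv \<Rightarrow> nat) \<Rightarrow> nat \<Rightarrow> nat \<Rightarrow> qv list" where
  "LL c i e = map QK (kl c i) @ (if e = 0 then [] else cl c i 0) @ (if e = 1 then [] else cl c i 1)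
     @ (if e = 2 then [] else cl c i 2) @ (if e = 3 then [] else cl c i 3)"

lemma LL_mem: "x \<in> set (LL c i e) \<Longrightarrow> (\<exists>t. x = QK t \<and> t < 4 \<and> c QW (QK t) = i) \<or>
   (\<exists>j t. x = QC j t \<and> j < 4 \<and> j \<noteq> e \<and> t \<in> set (cpick (\<lambda>t. c QW (QC j t)) i))"
  by (auto simp: LL_def kl_def cl_def split: if_splits)

lemma LL_len: "length (LL c i e) = length (kl c i) + (if e = 0 then 0 else length (cpick (\<lambda>t. c QW (QC 0 t)) i))
   + (if e = 1 then 0 else length (cpick (\<lambda>t. c QW (QC 1 t)) i))
   + (if e = 2 then 0 else length (cpick (\<lambda>t. c QW (QC 2 t)) i))
   + (if e = 3 then 0 else length (cpick (\<lambda>t. c QW (QC 3 t)) i))"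
  by (simp add: LL_def cl_def)

lemma cl_set: "x \<in> set (cl c i j) \<Longrightarrow> \<exists>t. x = QC j t" by (auto simp: cl_def)
lemma cl_distinct: "distinct (cl c i j)" by (simp add: cl_def distinct_map cpick_distinct inj_on_def)

lemma LL_distinct: "distinct (LL c i e)"
proof -
  define cl' where "cl' j = (if e = j then [] else cl c i j)" for j
  have L: "LL c i e = map QK (kl c i) @ cl' 0 @ cl' 1 @ cl' 2 @ cl' 3"
    by (simp add: LL_def cl'_def)
  have D: "distinct (cl' j)" for j by (simp add: cl'_def cl_distinct)
  have S: "x \<in> set (cl' j) \<Longrightarrow> \<exists>t. x = QC j t" for x j
    by (auto simp: cl'_def split: if_splits dest: cl_set)
  have X: "j \<noteq> j' \<Longrightarrow> set (cl' j) \<inter> set (cl' j') = {}" for j j'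
    by (auto dest!: S)
  have K: "set (map QK (kl c i)) \<inter> set (cl' j) = {}" for j
    by (auto dest!: S)
  have DK: "distinct (map QK (kl c i))" by (simp add: kl_def)
  show ?thesis unfolding L distinct_append set_append Int_Un_distrib
    using D X K DK by simp
qed

lemma LL_cliq: assumes "c QW (QK 0) \<noteq> c QW (QK 1)" shows "cliq c i (LL c i e)"
  unfolding cliq_def
proof (intro conjI)
  show "distinct (LL c i e)" by (rule LL_distinct)
  show "\<forall>x\<in>set (LL c i e). x \<in> Q_verts \<and> x \<noteq> QW \<and> c QW x = i"
  proof
    fix x assume "x \<in> set (LL c i e)"
    then show "x \<in> Q_verts \<and> x \<noteq> QW \<and> c QW x = i"
      using LL_mem[of x c i e] QK_in QC_in cpick_set by fastforce
  qed
  show "\<forall>x\<in>set (LL c i e). \<forall>y\<in>set (LL c i e). x \<noteq> y \<longrightarrow> Q_adj x y"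
  proof (intro ballI impI)
  fix x y assume x: "x \<in> set (LL c i e)" and y: "y \<in> set (LL c i e)" and xy: "x \<noteq> y"
  have xv: "x \<in> Q_verts" and yv: "y \<in> Q_verts"
    using LL_mem[OF x] LL_mem[OF y] QK_in QC_in cpick_set by fastforce+
  show "Q_adj x y"
    using LL_mem[OF x] LL_mem[OF y]
  proof (elim disjE exE conjE)
    fix t t' assume h: "x = QK t" "t < 4" "c QW (QK t) = i" "y = QK t'" "t' < 4" "c QW (QK t') = i"
    have "{t,t'} \<noteq> {0,1}"
    proof
      assume "{t,t'} = {0,1}"
      then have "(t=0 \<and> t'=1) \<or> (t=1 \<and> t'=0)" by (auto simp: doubleton_eq_iff)
      then show False using h assms by auto
    qed
    then show ?thesis using h xv yv xy by (auto simp: Q_adj_def)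
  next
    fix t j t' assume "x = QK t" "y = QC j t'"
    then show ?thesis using xv yv by (auto simp: Q_adj_def)
  next
    fix t j t' assume "y = QK t" "x = QC j t'"
    then show ?thesis using xv yv by (auto simp: Q_adj_def)
  next
    fix j t j' t' assume a: "x = QC j t" "t \<in> set (cpick (\<lambda>t. c QW (QC j t)) i)"
      "y = QC j' t'" "t' \<in> set (cpick (\<lambda>t. c QW (QC j' t)) i)"
    show ?thesis
    proof (cases "j = j'")
      case True
      then show ?thesis using a xv yv xy cpick_adj[of t _ i t'] by (auto simp: Q_adj_def)
    next
      case False
      then show ?thesis using a xv yv by (auto simp: Q_adj_def)
    qed
  qed
  qed
qed

lemma LL_part: "x \<in> set (LL c i j) \<Longrightarrow> part x \<noteq> j + 2"
  using LL_mem[of x c i j] by auto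

lemma two_col: "(i::nat)<3 \<Longrightarrow> (u::nat)<3 \<Longrightarrow> u\<noteq>i \<Longrightarrow> (v::nat)<3 \<Longrightarrow> v\<noteq>i \<Longrightarrow> (u = v) = ((u = (if i=0 then 1 else 0)) = (v = (if i = 0 then 1 else 0)))"
  by (auto simp: less_Suc_eq numeral_3_eq_3)
definition E_r6 :: "(nat*nat) set" where "E_r6 = {(0,1), (0,2), (0,3), (0,4), (0,5), (1,2), (1,3), (1,4), (1,5), (2,3), (2,4), (2,5), (3,4), (3,5), (4,5)}"
lemma r6_bool:
  fixes B :: "nat \<Rightarrow> nat \<Rightarrow> bool"
  shows "(B 0 1 = B 1 2 \<and> B 0 1 = B 0 2) \<or> (B 0 1 = B 1 3 \<and> B 0 1 = B 0 3) \<or> (B 0 1 = B 1 4 \<and> B 0 1 = B 0 4) \<or> (B 0 1 = B 1 5 \<and> B 0 1 = B 0 5) \<or> (B 0 2 = B 2 3 \<and> B 0 2 = B 0 3) \<or> (B 0 2 = B 2 4 \<and> B 0 2 = B 0 4) \<or> (B 0 2 = B 2 5 \<and> B 0 2 = B 0 5) \<or> (B 0 3 = B 3 4 \<and> B 0 3 = B 0 4) \<or> (B 0 3 = B 3 5 \<and> B 0 3 = B 0 5) \<or> (B 0 4 = B 4 5 \<and> B 0 4 = B 0 5) \<or> (B 1 2 = B 2 3 \<and> B 1 2 = B 1 3) \<or> (B 1 2 = B 2 4 \<and> B 1 2 = B 1 4) \<or> (B 1 2 = B 2 5 \<and> B 1 2 = B 1 5) \<or> (B 1 3 = B 3 4 \<and>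 B 1 3 = B 1 4) \<or> (B 1 3 = B 3 5 \<and> B 1 3 = B 1 5) \<or> (B 1 4 = B 4 5 \<and> B 1 4 = B 1 5) \<or> (B 2 3 = B 3 4 \<and> B 2 3 = B 2 4) \<or> (B 2 3 = B 3 5 \<and> B 2 3 = B 2 5) \<or> (B 2 4 = B 4 5 \<and> B 2 4 = B 2 5) \<or> (B 3 4 = B 4 5 \<and> B 3 4 = B 3 5)"
  by sat
lemma r6_nat:
  fixes g :: "nat \<Rightarrow> nat \<Rightarrow> nat"
  assumes I: "i < (3::nat)" and H: "\<And>p q. (p,q) \<in> E_r6 \<Longrightarrow> g p q < 3 \<and> g p q \<noteq> i"
  shows "\<exists>a b c. (a,b) \<in> E_r6 \<and> (b,c) \<in> E_r6 \<and> (a,c) \<in> E_r6 \<and> g a b = g b c \<and> g a b = g a c"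
proof -
  define j where "j = (if i = 0 then 1 else (0::nat))"
  have cv: "\<And>p q p' q'. (p,q) \<in> E_r6 \<Longrightarrow> (p',q') \<in> E_r6 \<Longrightarrow> (g p q = g p' q') = ((g p q = j) = (g p' q' = j))"
  proof -
    fix p q p' q' assume a: "(p,q) \<in> E_r6" and b: "(p',q') \<in> E_r6"
    show "(g p q = g p' q') = ((g p q = j) = (g p' q' = j))" using H[OF a] H[OF b] unfolding j_def by (intro two_col[OF I]) auto
  qed
  have e0: "(g 0 1 = g 1 2) = ((g 0 1 = j) = (g 1 2 = j))" by (rule cv) (simp_all add: E_r6_def)
  have e1: "(g 0 1 = g 0 2) = ((g 0 1 = j) = (g 0 2 = j))" by (rule cv) (simp_all add: E_r6_def)
  have e2: "(g 0 1 = g 1 3) = ((g 0 1 = j) = (g 1 3 = j))" by (rule cv) (simp_all add: E_r6_def)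
  have e3: "(g 0 1 = g 0 3) = ((g 0 1 = j) = (g 0 3 = j))" by (rule cv) (simp_all add: E_r6_def)
  have e4: "(g 0 1 = g 1 4) = ((g 0 1 = j) = (g 1 4 = j))" by (rule cv) (simp_all add: E_r6_def)
  have e5: "(g 0 1 = g 0 4) = ((g 0 1 = j) = (g 0 4 = j))" by (rule cv) (simp_all add: E_r6_def)
  have e6: "(g 0 1 = g 1 5) = ((g 0 1 = j) = (g 1 5 = j))" by (rule cv) (simp_all add: E_r6_def)
  have e7: "(g 0 1 = g 0 5) = ((g 0 1 = j) = (g 0 5 = j))" by (rule cv) (simp_all add: E_r6_def)
  have e8: "(g 0 2 = g 2 3) = ((g 0 2 = j) = (g 2 3 = j))" by (rule cv) (simp_all add: E_r6_def)
  have e9: "(g 0 2 = g 0 3) = ((g 0 2 = j) = (g 0 3 = j))" by (rule cv) (simp_all add: E_r6_def)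
  have e10: "(g 0 2 = g 2 4) = ((g 0 2 = j) = (g 2 4 = j))" by (rule cv) (simp_all add: E_r6_def)
  have e11: "(g 0 2 = g 0 4) = ((g 0 2 = j) = (g 0 4 = j))" by (rule cv) (simp_all add: E_r6_def)
  have e12: "(g 0 2 = g 2 5) = ((g 0 2 = j) = (g 2 5 = j))" by (rule cv) (simp_all add: E_r6_def)
  have e13: "(g 0 2 = g 0 5) = ((g 0 2 = j) = (g 0 5 = j))" by (rule cv) (simp_all add: E_r6_def)
  have e14: "(g 0 3 = g 3 4) = ((g 0 3 = j) = (g 3 4 = j))" by (rule cv) (simp_all add: E_r6_def)
  have e15: "(g 0 3 = g 0 4) = ((g 0 3 = j) = (g 0 4 = j))" by (rule cv) (simp_all add: E_r6_def)
  have e16: "(g 0 3 = g 3 5) = ((g 0 3 = j) = (g 3 5 = j))" by (rule cv) (simp_all add: E_r6_def)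
  have e17: "(g 0 3 = g 0 5) = ((g 0 3 = j) = (g 0 5 = j))" by (rule cv) (simp_all add: E_r6_def)
  have e18: "(g 0 4 = g 4 5) = ((g 0 4 = j) = (g 4 5 = j))" by (rule cv) (simp_all add: E_r6_def)
  have e19: "(g 0 4 = g 0 5) = ((g 0 4 = j) = (g 0 5 = j))" by (rule cv) (simp_all add: E_r6_def)
  have e20: "(g 1 2 = g 2 3) = ((g 1 2 = j) = (g 2 3 = j))" by (rule cv) (simp_all add: E_r6_def)
  have e21: "(g 1 2 = g 1 3) = ((g 1 2 = j) = (g 1 3 = j))" by (rule cv) (simp_all add: E_r6_def)
  have e22: "(g 1 2 = g 2 4) = ((g 1 2 = j) = (g 2 4 = j))" by (rule cv) (simp_all add: E_r6_def)
  have e23: "(g 1 2 = g 1 4) = ((g 1 2 = j) = (g 1 4 = j))" by (rule cv) (simp_all add: E_r6_def)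
  have e24: "(g 1 2 = g 2 5) = ((g 1 2 = j) = (g 2 5 = j))" by (rule cv) (simp_all add: E_r6_def)
  have e25: "(g 1 2 = g 1 5) = ((g 1 2 = j) = (g 1 5 = j))" by (rule cv) (simp_all add: E_r6_def)
  have e26: "(g 1 3 = g 3 4) = ((g 1 3 = j) = (g 3 4 = j))" by (rule cv) (simp_all add: E_r6_def)
  have e27: "(g 1 3 = g 1 4) = ((g 1 3 = j) = (g 1 4 = j))" by (rule cv) (simp_all add: E_r6_def)
  have e28: "(g 1 3 = g 3 5) = ((g 1 3 = j) = (g 3 5 = j))" by (rule cv) (simp_all add: E_r6_def)
  have e29: "(g 1 3 = g 1 5) = ((g 1 3 = j) = (g 1 5 = j))" by (rule cv) (simp_all add: E_r6_def)
  have e30: "(g 1 4 = g 4 5) = ((g 1 4 = j) = (g 4 5 = j))" by (rule cv) (simp_all add: E_r6_def)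
  have e31: "(g 1 4 = g 1 5) = ((g 1 4 = j) = (g 1 5 = j))" by (rule cv) (simp_all add: E_r6_def)
  have e32: "(g 2 3 = g 3 4) = ((g 2 3 = j) = (g 3 4 = j))" by (rule cv) (simp_all add: E_r6_def)
  have e33: "(g 2 3 = g 2 4) = ((g 2 3 = j) = (g 2 4 = j))" by (rule cv) (simp_all add: E_r6_def)
  have e34: "(g 2 3 = g 3 5) = ((g 2 3 = j) = (g 3 5 = j))" by (rule cv) (simp_all add: E_r6_def)
  have e35: "(g 2 3 = g 2 5) = ((g 2 3 = j) = (g 2 5 = j))" by (rule cv) (simp_all add: E_r6_def)
  have e36: "(g 2 4 = g 4 5) = ((g 2 4 = j) = (g 4 5 = j))" by (rule cv) (simp_all add: E_r6_def)
  have e37: "(g 2 4 = g 2 5) = ((g 2 4 = j) = (g 2 5 = j))" by (rule cv) (simp_all add: E_r6_def)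
  have e38: "(g 3 4 = g 4 5) = ((g 3 4 = j) = (g 4 5 = j))" by (rule cv) (simp_all add: E_r6_def)
  have e39: "(g 3 4 = g 3 5) = ((g 3 4 = j) = (g 3 5 = j))" by (rule cv) (simp_all add: E_r6_def)
  have D: "(g 0 1 = g 1 2 \<and> g 0 1 = g 0 2) \<or> (g 0 1 = g 1 3 \<and> g 0 1 = g 0 3) \<or> (g 0 1 = g 1 4 \<and> g 0 1 = g 0 4) \<or> (g 0 1 = g 1 5 \<and> g 0 1 = g 0 5) \<or> (g 0 2 = g 2 3 \<and> g 0 2 = g 0 3) \<or> (g 0 2 = g 2 4 \<and> g 0 2 = g 0 4) \<or> (g 0 2 = g 2 5 \<and> g 0 2 = g 0 5) \<or> (g 0 3 = g 3 4 \<and> g 0 3 = g 0 4) \<or> (g 0 3 = g 3 5 \<and> g 0 3 = g 0 5) \<or> (g 0 4 = g 4 5 \<and> g 0 4 = g 0 5) \<or> (g 1 2 = g 2 3 \<and> g 1 2 = g 1 3) \<or> (g 1 2 = g 2 4 \<and> g 1 2 = g 1 4) \<or> (g 1 2 = g 2 5 \<and> g 1 2 = g 1 5) \<or> (g 1 3 = g 3 4 \<and> g 1 3 = g 1 4) \<or> (g 1 3 = g 3 5 \<and> g 1 3 = g 1 5) \<or> (g 1 4 = g 4 5 \<and> g 1 4 = g 1 5) \<or> (g 2 3 = g 3 4 \<and> g 2 3 = g 2 4) \<or> (g 2 3 = g 3 5 \<and> g 2 3 = g 2 5) \<or> (g 2 4 = g 4 5 \<and> g 2 4 = g 2 5) \<or>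 (g 3 4 = g 4 5 \<and> g 3 4 = g 3 5)"
    using r6_bool[of "\<lambda>p q. g p q = j"] by (simp only: e0 e1 e2 e3 e4 e5 e6 e7 e8 e9 e10 e11 e12 e13 e14 e15 e16 e17 e18 e19 e20 e21 e22 e23 e24 e25 e26 e27 e28 e29 e30 e31 e32 e33 e34 e35 e36 e37 e38 e39)
  then show ?thesis
    apply (elim disjE)
    apply (rule exI[of _ 0], rule exI[of _ 1], rule exI[of _ 2], simp add: E_r6_def)
    apply (rule exI[of _ 0], rule exI[of _ 1], rule exI[of _ 3], simp add: E_r6_def)
    apply (rule exI[of _ 0], rule exI[of _ 1], rule exI[of _ 4], simp add: E_r6_def)
    apply (rule exI[of _ 0], rule exI[of _ 1], rule exI[of _ 5], simp add: E_r6_def)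
    apply (rule exI[of _ 0], rule exI[of _ 2], rule exI[of _ 3], simp add: E_r6_def)
    apply (rule exI[of _ 0], rule exI[of _ 2], rule exI[of _ 4], simp add: E_r6_def)
    apply (rule exI[of _ 0], rule exI[of _ 2], rule exI[of _ 5], simp add: E_r6_def)
    apply (rule exI[of _ 0], rule exI[of _ 3], rule exI[of _ 4], simp add: E_r6_def)
    apply (rule exI[of _ 0], rule exI[of _ 3], rule exI[of _ 5], simp add: E_r6_def)
    apply (rule exI[of _ 0], rule exI[of _ 4], rule exI[of _ 5], simp add: E_r6_def)
    apply (rule exI[of _ 1], rule exI[of _ 2], rule exI[of _ 3], simp add: E_r6_def)
    apply (rule exI[of _ 1], rule exI[of _ 2], rule exI[of _ 4], simp add: E_r6_def)
    apply (rule exI[of _ 1], rule exI[of _ 2], rule exI[of _ 5], simp add: E_r6_def)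
    apply (rule exI[of _ 1], rule exI[of _ 3], rule exI[of _ 4], simp add: E_r6_def)
    apply (rule exI[of _ 1], rule exI[of _ 3], rule exI[of _ 5], simp add: E_r6_def)
    apply (rule exI[of _ 1], rule exI[of _ 4], rule exI[of _ 5], simp add: E_r6_def)
    apply (rule exI[of _ 2], rule exI[of _ 3], rule exI[of _ 4], simp add: E_r6_def)
    apply (rule exI[of _ 2], rule exI[of _ 3], rule exI[of _ 5], simp add: E_r6_def)
    apply (rule exI[of _ 2], rule exI[of _ 4], rule exI[of _ 5], simp add: E_r6_def)
    apply (rule exI[of _ 3], rule exI[of _ 4], rule exI[of _ 5], simp add: E_r6_def)
    done
qed

definition E_g8 :: "(nat*nat) set" where "E_g8 = {(0,1), (0,2), (0,3), (0,4), (0,5), (0,6), (0,7), (1,2), (1,3), (1,4), (1,5), (1,6), (1,7), (2,3), (2,4), (2,5), (2,6), (2,7), (3,4), (3,7), (4,5), (5,6), (6,7)}"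
lemma g8_bool:
  fixes B :: "nat \<Rightarrow> nat \<Rightarrow> bool"
  shows "(B 0 1 = B 1 2 \<and> B 0 1 = B 0 2) \<or> (B 0 1 = B 1 3 \<and> B 0 1 = B 0 3) \<or> (B 0 1 = B 1 4 \<and> B 0 1 = B 0 4) \<or> (B 0 1 = B 1 5 \<and> B 0 1 = B 0 5) \<or> (B 0 1 = B 1 6 \<and> B 0 1 = B 0 6) \<or> (B 0 1 = B 1 7 \<and> B 0 1 = B 0 7) \<or> (B 0 2 = B 2 3 \<and> B 0 2 = B 0 3) \<or> (B 0 2 = B 2 4 \<and> B 0 2 = B 0 4) \<or> (B 0 2 = B 2 5 \<and> B 0 2 = B 0 5) \<or> (B 0 2 = B 2 6 \<and> B 0 2 = B 0 6) \<or> (B 0 2 = B 2 7 \<and> B 0 2 = B 0 7) \<or> (B 0 3 = B 3 4 \<and> B 0 3 = B 0 4) \<or> (B 0 3 = B 3 7 \<and> B 0 3 = B 0 7) \<or> (B 0 4 = B 4 5 \<and> B 0 4 = B 0 5) \<or> (B 0 5 = B 5 6 \<and> B 0 5 = B 0 6) \<or> (B 0 6 = B 6 7 \<and> B 0 6 = B 0 7) \<or> (B 1 2 = B 2 3 \<and> B 1 2 = B 1 3) \<or> (B 1 2 = B 2 4 \<and> B 1 2 = B 1 4) \<or> (B 1 2 = B 2 5 \<and> B 1 2 = B 1 5) \<or> (B 1 2 = B 2 6 \<and> B 1 2 = B 1 6) \<or> (B 1 2 = B 2 7 \<and> B 1 2 = B 1 7) \<or> (B 1 3 = B 3 4 \<and>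 B 1 3 = B 1 4) \<or> (B 1 3 = B 3 7 \<and> B 1 3 = B 1 7) \<or> (B 1 4 = B 4 5 \<and> B 1 4 = B 1 5) \<or> (B 1 5 = B 5 6 \<and> B 1 5 = B 1 6) \<or> (B 1 6 = B 6 7 \<and> B 1 6 = B 1 7) \<or> (B 2 3 = B 3 4 \<and> B 2 3 = B 2 4) \<or> (B 2 3 = B 3 7 \<and> B 2 3 = B 2 7) \<or> (B 2 4 = B 4 5 \<and> B 2 4 = B 2 5) \<or> (B 2 5 = B 5 6 \<and> B 2 5 = B 2 6) \<or> (B 2 6 = B 6 7 \<and> B 2 6 = B 2 7)"
  by sat
lemma g8_nat:
  fixes g :: "nat \<Rightarrow> nat \<Rightarrow> nat"
  assumes I: "i < (3::nat)" and H: "\<And>p q. (p,q) \<in> E_g8 \<Longrightarrow> g p q < 3 \<and> g p q \<noteq> i"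
  shows "\<exists>a b c. (a,b) \<in> E_g8 \<and> (b,c) \<in> E_g8 \<and> (a,c) \<in> E_g8 \<and> g a b = g b c \<and> g a b = g a c"
proof -
  define j where "j = (if i = 0 then 1 else (0::nat))"
  have cv: "\<And>p q p' q'. (p,q) \<in> E_g8 \<Longrightarrow> (p',q') \<in> E_g8 \<Longrightarrow> (g p q = g p' q') = ((g p q = j) = (g p' q' = j))"
  proof -
    fix p q p' q' assume a: "(p,q) \<in> E_g8" and b: "(p',q') \<in> E_g8"
    show "(g p q = g p' q') = ((g p q = j) = (g p' q' = j))" using H[OF a] H[OF b] unfolding j_def by (intro two_col[OF I]) auto
  qed
  have e0: "(g 0 1 = g 1 2) = ((g 0 1 = j) = (g 1 2 = j))" by (rule cv) (simp_all add: E_g8_def)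
  have e1: "(g 0 1 = g 0 2) = ((g 0 1 = j) = (g 0 2 = j))" by (rule cv) (simp_all add: E_g8_def)
  have e2: "(g 0 1 = g 1 3) = ((g 0 1 = j) = (g 1 3 = j))" by (rule cv) (simp_all add: E_g8_def)
  have e3: "(g 0 1 = g 0 3) = ((g 0 1 = j) = (g 0 3 = j))" by (rule cv) (simp_all add: E_g8_def)
  have e4: "(g 0 1 = g 1 4) = ((g 0 1 = j) = (g 1 4 = j))" by (rule cv) (simp_all add: E_g8_def)
  have e5: "(g 0 1 = g 0 4) = ((g 0 1 = j) = (g 0 4 = j))" by (rule cv) (simp_all add: E_g8_def)
  have e6: "(g 0 1 = g 1 5) = ((g 0 1 = j) = (g 1 5 = j))" by (rule cv) (simp_all add: E_g8_def)
  have e7: "(g 0 1 = g 0 5) = ((g 0 1 = j) = (g 0 5 = j))" by (rule cv) (simp_all add: E_g8_def)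
  have e8: "(g 0 1 = g 1 6) = ((g 0 1 = j) = (g 1 6 = j))" by (rule cv) (simp_all add: E_g8_def)
  have e9: "(g 0 1 = g 0 6) = ((g 0 1 = j) = (g 0 6 = j))" by (rule cv) (simp_all add: E_g8_def)
  have e10: "(g 0 1 = g 1 7) = ((g 0 1 = j) = (g 1 7 = j))" by (rule cv) (simp_all add: E_g8_def)
  have e11: "(g 0 1 = g 0 7) = ((g 0 1 = j) = (g 0 7 = j))" by (rule cv) (simp_all add: E_g8_def)
  have e12: "(g 0 2 = g 2 3) = ((g 0 2 = j) = (g 2 3 = j))" by (rule cv) (simp_all add: E_g8_def)
  have e13: "(g 0 2 = g 0 3) = ((g 0 2 = j) = (g 0 3 = j))" by (rule cv) (simp_all add: E_g8_def)
  have e14: "(g 0 2 = g 2 4) = ((g 0 2 = j) = (g 2 4 = j))" by (rule cv) (simp_all add: E_g8_def)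
  have e15: "(g 0 2 = g 0 4) = ((g 0 2 = j) = (g 0 4 = j))" by (rule cv) (simp_all add: E_g8_def)
  have e16: "(g 0 2 = g 2 5) = ((g 0 2 = j) = (g 2 5 = j))" by (rule cv) (simp_all add: E_g8_def)
  have e17: "(g 0 2 = g 0 5) = ((g 0 2 = j) = (g 0 5 = j))" by (rule cv) (simp_all add: E_g8_def)
  have e18: "(g 0 2 = g 2 6) = ((g 0 2 = j) = (g 2 6 = j))" by (rule cv) (simp_all add: E_g8_def)
  have e19: "(g 0 2 = g 0 6) = ((g 0 2 = j) = (g 0 6 = j))" by (rule cv) (simp_all add: E_g8_def)
  have e20: "(g 0 2 = g 2 7) = ((g 0 2 = j) = (g 2 7 = j))" by (rule cv) (simp_all add: E_g8_def)
  have e21: "(g 0 2 = g 0 7) = ((g 0 2 = j) = (g 0 7 = j))" by (rule cv) (simp_all add: E_g8_def)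
  have e22: "(g 0 3 = g 3 4) = ((g 0 3 = j) = (g 3 4 = j))" by (rule cv) (simp_all add: E_g8_def)
  have e23: "(g 0 3 = g 0 4) = ((g 0 3 = j) = (g 0 4 = j))" by (rule cv) (simp_all add: E_g8_def)
  have e24: "(g 0 3 = g 3 7) = ((g 0 3 = j) = (g 3 7 = j))" by (rule cv) (simp_all add: E_g8_def)
  have e25: "(g 0 3 = g 0 7) = ((g 0 3 = j) = (g 0 7 = j))" by (rule cv) (simp_all add: E_g8_def)
  have e26: "(g 0 4 = g 4 5) = ((g 0 4 = j) = (g 4 5 = j))" by (rule cv) (simp_all add: E_g8_def)
  have e27: "(g 0 4 = g 0 5) = ((g 0 4 = j) = (g 0 5 = j))" by (rule cv) (simp_all add: E_g8_def)
  have e28: "(g 0 5 = g 5 6) = ((g 0 5 = j) = (g 5 6 = j))" by (rule cv) (simp_all add: E_g8_def)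
  have e29: "(g 0 5 = g 0 6) = ((g 0 5 = j) = (g 0 6 = j))" by (rule cv) (simp_all add: E_g8_def)
  have e30: "(g 0 6 = g 6 7) = ((g 0 6 = j) = (g 6 7 = j))" by (rule cv) (simp_all add: E_g8_def)
  have e31: "(g 0 6 = g 0 7) = ((g 0 6 = j) = (g 0 7 = j))" by (rule cv) (simp_all add: E_g8_def)
  have e32: "(g 1 2 = g 2 3) = ((g 1 2 = j) = (g 2 3 = j))" by (rule cv) (simp_all add: E_g8_def)
  have e33: "(g 1 2 = g 1 3) = ((g 1 2 = j) = (g 1 3 = j))" by (rule cv) (simp_all add: E_g8_def)
  have e34: "(g 1 2 = g 2 4) = ((g 1 2 = j) = (g 2 4 = j))" by (rule cv) (simp_all add: E_g8_def)
  have e35: "(g 1 2 = g 1 4) = ((g 1 2 = j) = (g 1 4 = j))" by (rule cv) (simp_all add: E_g8_def)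
  have e36: "(g 1 2 = g 2 5) = ((g 1 2 = j) = (g 2 5 = j))" by (rule cv) (simp_all add: E_g8_def)
  have e37: "(g 1 2 = g 1 5) = ((g 1 2 = j) = (g 1 5 = j))" by (rule cv) (simp_all add: E_g8_def)
  have e38: "(g 1 2 = g 2 6) = ((g 1 2 = j) = (g 2 6 = j))" by (rule cv) (simp_all add: E_g8_def)
  have e39: "(g 1 2 = g 1 6) = ((g 1 2 = j) = (g 1 6 = j))" by (rule cv) (simp_all add: E_g8_def)
  have e40: "(g 1 2 = g 2 7) = ((g 1 2 = j) = (g 2 7 = j))" by (rule cv) (simp_all add: E_g8_def)
  have e41: "(g 1 2 = g 1 7) = ((g 1 2 = j) = (g 1 7 = j))" by (rule cv) (simp_all add: E_g8_def)
  have e42: "(g 1 3 = g 3 4) = ((g 1 3 = j) = (g 3 4 = j))" by (rule cv) (simp_all add: E_g8_def)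
  have e43: "(g 1 3 = g 1 4) = ((g 1 3 = j) = (g 1 4 = j))" by (rule cv) (simp_all add: E_g8_def)
  have e44: "(g 1 3 = g 3 7) = ((g 1 3 = j) = (g 3 7 = j))" by (rule cv) (simp_all add: E_g8_def)
  have e45: "(g 1 3 = g 1 7) = ((g 1 3 = j) = (g 1 7 = j))" by (rule cv) (simp_all add: E_g8_def)
  have e46: "(g 1 4 = g 4 5) = ((g 1 4 = j) = (g 4 5 = j))" by (rule cv) (simp_all add: E_g8_def)
  have e47: "(g 1 4 = g 1 5) = ((g 1 4 = j) = (g 1 5 = j))" by (rule cv) (simp_all add: E_g8_def)
  have e48: "(g 1 5 = g 5 6) = ((g 1 5 = j) = (g 5 6 = j))" by (rule cv) (simp_all add: E_g8_def)
  have e49: "(g 1 5 = g 1 6) = ((g 1 5 = j) = (g 1 6 = j))" by (rule cv) (simp_all add: E_g8_def)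
  have e50: "(g 1 6 = g 6 7) = ((g 1 6 = j) = (g 6 7 = j))" by (rule cv) (simp_all add: E_g8_def)
  have e51: "(g 1 6 = g 1 7) = ((g 1 6 = j) = (g 1 7 = j))" by (rule cv) (simp_all add: E_g8_def)
  have e52: "(g 2 3 = g 3 4) = ((g 2 3 = j) = (g 3 4 = j))" by (rule cv) (simp_all add: E_g8_def)
  have e53: "(g 2 3 = g 2 4) = ((g 2 3 = j) = (g 2 4 = j))" by (rule cv) (simp_all add: E_g8_def)
  have e54: "(g 2 3 = g 3 7) = ((g 2 3 = j) = (g 3 7 = j))" by (rule cv) (simp_all add: E_g8_def)
  have e55: "(g 2 3 = g 2 7) = ((g 2 3 = j) = (g 2 7 = j))" by (rule cv) (simp_all add: E_g8_def)
  have e56: "(g 2 4 = g 4 5) = ((g 2 4 = j) = (g 4 5 = j))" by (rule cv) (simp_all add: E_g8_def)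
  have e57: "(g 2 4 = g 2 5) = ((g 2 4 = j) = (g 2 5 = j))" by (rule cv) (simp_all add: E_g8_def)
  have e58: "(g 2 5 = g 5 6) = ((g 2 5 = j) = (g 5 6 = j))" by (rule cv) (simp_all add: E_g8_def)
  have e59: "(g 2 5 = g 2 6) = ((g 2 5 = j) = (g 2 6 = j))" by (rule cv) (simp_all add: E_g8_def)
  have e60: "(g 2 6 = g 6 7) = ((g 2 6 = j) = (g 6 7 = j))" by (rule cv) (simp_all add: E_g8_def)
  have e61: "(g 2 6 = g 2 7) = ((g 2 6 = j) = (g 2 7 = j))" by (rule cv) (simp_all add: E_g8_def)
  have D: "(g 0 1 = g 1 2 \<and> g 0 1 = g 0 2) \<or> (g 0 1 = g 1 3 \<and> g 0 1 = g 0 3) \<or> (g 0 1 = g 1 4 \<and> g 0 1 = g 0 4) \<or> (g 0 1 = g 1 5 \<and> g 0 1 = g 0 5) \<or> (g 0 1 = g 1 6 \<and> g 0 1 = g 0 6) \<or> (g 0 1 = g 1 7 \<and> g 0 1 = g 0 7) \<or> (g 0 2 = g 2 3 \<and> g 0 2 = g 0 3) \<or> (g 0 2 = g 2 4 \<and> g 0 2 = g 0 4) \<or> (g 0 2 = g 2 5 \<and> g 0 2 = g 0 5) \<or> (g 0 2 = g 2 6 \<and> g 0 2 = g 0 6) \<or> (g 0 2 = g 2 7 \<and> g 0 2 = g 0 7) \<or> (g 0 3 = g 3 4 \<and> g 0 3 = g 0 4) \<or> (g 0 3 = g 3 7 \<and> g 0 3 = g 0 7) \<or> (g 0 4 = g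 4 5 \<and> g 0 4 = g 0 5) \<or> (g 0 5 = g 5 6 \<and> g 0 5 = g 0 6) \<or> (g 0 6 = g 6 7 \<and> g 0 6 = g 0 7) \<or> (g 1 2 = g 2 3 \<and> g 1 2 = g 1 3) \<or> (g 1 2 = g 2 4 \<and> g 1 2 = g 1 4) \<or> (g 1 2 = g 2 5 \<and> g 1 2 = g 1 5) \<or> (g 1 2 = g 2 6 \<and> g 1 2 = g 1 6) \<or> (g 1 2 = g 2 7 \<and> g 1 2 = g 1 7) \<or> (g 1 3 = g 3 4 \<and> g 1 3 = g 1 4) \<or> (g 1 3 = g 3 7 \<and> g 1 3 = g 1 7) \<or> (g 1 4 = g 4 5 \<and> g 1 4 = g 1 5) \<or> (g 1 5 = g 5 6 \<and> g 1 5 = g 1 6) \<or> (g 1 6 = g 6 7 \<and> g 1 6 = g 1 7) \<or> (g 2 3 = g 3 4 \<and> g 2 3 = g 2 4) \<or> (g 2 3 = g 3 7 \<and> g 2 3 = g 2 7) \<or> (g 2 4 = g 4 5 \<and> g 2 4 = g 2 5) \<or> (g 2 5 = g 5 6 \<and> g 2 5 = g 2 6) \<or> (g 2 6 = g 6 7 \<and> g 2 6 = g 2 7)"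
    using g8_bool[of "\<lambda>p q. g p q = j"] by (simp only: e0 e1 e2 e3 e4 e5 e6 e7 e8 e9 e10 e11 e12 e13 e14 e15 e16 e17 e18 e19 e20 e21 e22 e23 e24 e25 e26 e27 e28 e29 e30 e31 e32 e33 e34 e35 e36 e37 e38 e39 e40 e41 e42 e43 e44 e45 e46 e47 e48 e49 e50 e51 e52 e53 e54 e55 e56 e57 e58 e59 e60 e61)
  then show ?thesis
    apply (elim disjE)
    apply (rule exI[of _ 0], rule exI[of _ 1], rule exI[of _ 2], simp add: E_g8_def)
    apply (rule exI[of _ 0], rule exI[of _ 1], rule exI[of _ 3], simp add: E_g8_def)
    apply (rule exI[of _ 0], rule exI[of _ 1], rule exI[of _ 4], simp add: E_g8_def)
    apply (rule exI[of _ 0], rule exI[of _ 1], rule exI[of _ 5], simp add: E_g8_def)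
    apply (rule exI[of _ 0], rule exI[of _ 1], rule exI[of _ 6], simp add: E_g8_def)
    apply (rule exI[of _ 0], rule exI[of _ 1], rule exI[of _ 7], simp add: E_g8_def)
    apply (rule exI[of _ 0], rule exI[of _ 2], rule exI[of _ 3], simp add: E_g8_def)
    apply (rule exI[of _ 0], rule exI[of _ 2], rule exI[of _ 4], simp add: E_g8_def)
    apply (rule exI[of _ 0], rule exI[of _ 2], rule exI[of _ 5], simp add: E_g8_def)
    apply (rule exI[of _ 0], rule exI[of _ 2], rule exI[of _ 6], simp add: E_g8_def)
    apply (rule exI[of _ 0], rule exI[of _ 2], rule exI[of _ 7], simp add: E_g8_def)
    apply (rule exI[of _ 0], rule exI[of _ 3], rule exI[of _ 4], simp add: E_g8_def)
    apply (rule exI[of _ 0], rule exI[of _ 3], rule exI[of _ 7], simp add: E_g8_def)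
    apply (rule exI[of _ 0], rule exI[of _ 4], rule exI[of _ 5], simp add: E_g8_def)
    apply (rule exI[of _ 0], rule exI[of _ 5], rule exI[of _ 6], simp add: E_g8_def)
    apply (rule exI[of _ 0], rule exI[of _ 6], rule exI[of _ 7], simp add: E_g8_def)
    apply (rule exI[of _ 1], rule exI[of _ 2], rule exI[of _ 3], simp add: E_g8_def)
    apply (rule exI[of _ 1], rule exI[of _ 2], rule exI[of _ 4], simp add: E_g8_def)
    apply (rule exI[of _ 1], rule exI[of _ 2], rule exI[of _ 5], simp add: E_g8_def)
    apply (rule exI[of _ 1], rule exI[of _ 2], rule exI[of _ 6], simp add: E_g8_def)
    apply (rule exI[of _ 1], rule exI[of _ 2], rule exI[of _ 7], simp add: E_g8_def)
    apply (rule exI[of _ 1], rule exI[of _ 3], rule exI[of _ 4], simp add: E_g8_def)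
    apply (rule exI[of _ 1], rule exI[of _ 3], rule exI[of _ 7], simp add: E_g8_def)
    apply (rule exI[of _ 1], rule exI[of _ 4], rule exI[of _ 5], simp add: E_g8_def)
    apply (rule exI[of _ 1], rule exI[of _ 5], rule exI[of _ 6], simp add: E_g8_def)
    apply (rule exI[of _ 1], rule exI[of _ 6], rule exI[of _ 7], simp add: E_g8_def)
    apply (rule exI[of _ 2], rule exI[of _ 3], rule exI[of _ 4], simp add: E_g8_def)
    apply (rule exI[of _ 2], rule exI[of _ 3], rule exI[of _ 7], simp add: E_g8_def)
    apply (rule exI[of _ 2], rule exI[of _ 4], rule exI[of _ 5], simp add: E_g8_def)
    apply (rule exI[of _ 2], rule exI[of _ 5], rule exI[of _ 6], simp add: E_g8_def)
    apply (rule exI[of _ 2], rule exI[of _ 6], rule exI[of _ 7], simp add: E_g8_def)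
    done
qed

lemma E_r6_D: "(p,q) \<in> E_r6 \<Longrightarrow> p < q \<and> q < 6" by (auto simp: E_r6_def)
lemma E_g8_D: "(p,q) \<in> E_g8 \<Longrightarrow> p < q \<and> q < 8 \<and> (p < 3 \<or> (3 \<le> p \<and> ((p-3+1) mod 5 = q-3 \<or> (q-3+1) mod 5 = p-3)))"
  by (auto simp: E_g8_def)

lemma ramsey_app:
  assumes "edge_3col c" "\<not> mono_triangle c" "i < 3" "cliq c i L"
  shows "length L \<le> 5"
proof (rule ccontr)
  assume "\<not> length L \<le> 5"
  hence len: "6 \<le> length L" by simp
  have cl: "distinct L" "\<And>x. x \<in> set L \<Longrightarrow> x \<in> Q_verts \<and> x \<noteq> QW \<and> c QW x = i"
    "\<And>x y. x \<in> set L \<Longrightarrow> y \<in> set L \<Longrightarrow> x \<noteq> y \<Longrightarrow> Q_adj x y"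
    using assms(4) unfolding cliq_def by auto
  define g where "g p q = c (L!p) (L!q)" for p q
  have AD: "Q_adj (L!p) (L!q)" if "(p,q) \<in> E_r6" for p q
  proof -
    have pq: "p < q" "q < 6" using E_r6_D[OF that] by auto
    then have "L!p \<in> set L" "L!q \<in> set L" "L!p \<noteq> L!q" using len cl(1) by (auto simp: nth_eq_iff_index_eq)
    then show ?thesis using cl(3) by blast
  qed
  have H: "g p q < 3 \<and> g p q \<noteq> i" if "(p,q) \<in> E_r6" for p q
  proof -
    have pq: "p < q" "q < 6" using E_r6_D[OF that] by auto
    then have "L!p \<in> set L" "L!q \<in> set L" using len by auto
    then show ?thesis unfolding g_def using no_same[OF assms(1,2)] cl(2) AD[OF that] by blast
  qed
  obtain a b d where "(a,b) \<in> E_r6" "(b,d) \<in> E_r6" "(a,d) \<in> E_r6" "g a b = g b d" "g a b = g a d"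
    using r6_nat[where g=g, OF assms(3) H] by blast
  then have "mono_triangle c" unfolding mono_triangle_def g_def using AD by blast
  then show False using assms(2) by blast
qed

lemma graham_app:
  assumes "edge_3col c" "\<not> mono_triangle c" "i < 3" "cliq c i L" "j < 4"
    "\<forall>t<5. c QW (QC j t) = i" "\<forall>x\<in>set L. part x \<noteq> j + 2"
  shows "length L \<le> 2"
proof (rule ccontr)
  assume "\<not> length L \<le> 2"
  hence len: "3 \<le> length L" by simp
  have cl: "distinct L" "\<And>x. x \<in> set L \<Longrightarrow> x \<in> Q_verts \<and> x \<noteq> QW \<and> c QW x = i"
    "\<And>x y. x \<in> set L \<Longrightarrow> y \<in> set L \<Longrightarrow> x \<noteq> y \<Longrightarrow> Q_adj x y"
    using assms(4) unfolding cliq_def by auto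
  define h where "h p = (if p < 3 then L!p else QC j (p-3))" for p
  define g where "g p q = c (h p) (h q)" for p q
  have HV: "h p \<in> Q_verts \<and> h p \<noteq> QW \<and> c QW (h p) = i" if "p < 8" for p
  proof (cases "p < 3")
    case True
    then have "L!p \<in> set L" using len by auto
    then show ?thesis using cl(2) True by (simp add: h_def)
  next
    case False
    then show ?thesis using that assms(5,6) QC_in by (simp add: h_def)
  qed
  have AD: "Q_adj (h p) (h q)" if "(p,q) \<in> E_g8" for p q
  proof -
    have e: "p < q" "q < 8" "p < 3 \<or> (3 \<le> p \<and> ((p-3+1) mod 5 = q-3 \<or> (q-3+1) mod 5 = p-3))"
      using E_g8_D[OF that] by auto
    have vp: "h p \<in> Q_verts" and vq: "h q \<in> Q_verts" using HV e by auto
    show ?thesis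
    proof (cases "q < 3")
      case True
      then have "L!p \<in> set L" "L!q \<in> set L" "L!p \<noteq> L!q" using len cl(1) e by (auto simp: nth_eq_iff_index_eq)
      then show ?thesis using cl(3) True e by (simp add: h_def)
    next
      case q: False
      show ?thesis
      proof (cases "p < 3")
        case True
        then have "L!p \<in> set L" using len by auto
        then have "part (L!p) \<noteq> part (QC j (q-3))" using assms(7) by simp
        then show ?thesis using vp vq True q by (simp add: h_def Q_adj_def)
      next
        case False
        then show ?thesis using vp vq q e by (simp add: h_def Q_adj_def)
      qed
    qed
  qed
  have H: "g p q < 3 \<and> g p q \<noteq> i" if "(p,q) \<in> E_g8" for p q
  proof -
    have "p < 8" "q < 8" using E_g8_D[OF that] by auto
    then show ?thesis unfolding g_def using no_same[OF assms(1,2)] HV AD[OF that] by blast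
  qed
  obtain a b d where "(a,b) \<in> E_g8" "(b,d) \<in> E_g8" "(a,d) \<in> E_g8" "g a b = g b d" "g a b = g a d"
    using g8_nat[where g=g, OF assms(3) H] by blast
  then have "mono_triangle c" unfolding mono_triangle_def g_def using AD by blast
  then show False using assms(2) by blast
qed

lemma arith_core:
  fixes K :: "nat \<Rightarrow> nat" and C :: "nat \<Rightarrow> nat \<Rightarrow> nat" and F :: "nat \<Rightarrow> nat \<Rightarrow> bool"
  assumes K: "K 0 + K 1 + K 2 = 4" "\<And>i. i < 3 \<Longrightarrow> 1 \<le> K i"
    and R: "\<And>i. i < 3 \<Longrightarrow> K i + C i 0 + C i 1 + C i 2 + C i 3 \<le> 5"
    and R0: "\<And>i. i < 3 \<Longrightarrow> F i 0 \<Longrightarrow> K i + C i 1 + C i 2 + C i 3 \<le> 2"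
    and R1: "\<And>i. i < 3 \<Longrightarrow> F i 1 \<Longrightarrow> K i + C i 0 + C i 2 + C i 3 \<le> 2"
    and R2: "\<And>i. i < 3 \<Longrightarrow> F i 2 \<Longrightarrow> K i + C i 0 + C i 1 + C i 3 \<le> 2"
    and R3: "\<And>i. i < 3 \<Longrightarrow> F i 3 \<Longrightarrow> K i + C i 0 + C i 1 + C i 2 \<le> 2"
    and FF: "\<And>i j. F i j \<Longrightarrow> C i j = 2"
    and CC: "\<And>j. j < 4 \<Longrightarrow> (\<exists>i<3. F i j) \<or> 3 \<le> C 0 j + C 1 j + C 2 j"
  shows False
proof -
  define ind where "ind b = (if b then 1 else 0::nat)" for b
  have r: "K i + C i 0 + C i 1 + C i 2 + C i 3 + ind (F i 0) + ind (F i 1) + ind (F i 2) + ind (F i 3) \<le> 5"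
    if i: "i < 3" for i
  proof -
    note a = K(2)[OF i] R[OF i] R0[OF i] R1[OF i] R2[OF i] R3[OF i] FF[of i 0] FF[of i 1] FF[of i 2] FF[of i 3]
    show ?thesis using a
      by (cases "F i 0"; cases "F i 1"; cases "F i 2"; cases "F i 3"; simp add: ind_def; linarith)
  qed
  have cc: "3 \<le> C 0 j + C 1 j + C 2 j + ind (F 0 j) + ind (F 1 j) + ind (F 2 j)" if j: "j < 4" for j
  proof -
    have "(\<exists>i<3. F i j) \<or> 3 \<le> C 0 j + C 1 j + C 2 j" using CC[OF j] .
    then show ?thesis
    proof
      assume "\<exists>i<3. F i j"
      then obtain i where "i < 3" "F i j" by blast
      then show ?thesis using FF[of i j] by (auto simp: ind_def lt3)
    qed simp
  qed
  show False using r[of 0] r[of 1] r[of 2] cc[of 0] cc[of 1] cc[of 2] cc[of 3] K(1) by simp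
qed

theorem lemma3:
  fixes c :: "qv \<Rightarrow> qv \<Rightarrow> nat"
  assumes "edge_3col c"
    and "{c QW (QK i) | i. i < 4} = {0, 1, 2}"
    and "c QW (QK 0) \<noteq> c QW (QK 1)"
  shows "mono_triangle c"
proof (rule ccontr)
  assume nm: "\<not> mono_triangle c"
  define kc where "kc j = (\<lambda>t. c QW (QC j t))" for j
  define K where "K i = length (kl c i)" for i
  define C where "C i j = length (cpick (kc j) i)" for i j
  define F where "F i j = (\<forall>t<5. kc j t = i)" for i j
  have colK: "c QW (QK t) < 3" if "t < 4" for t
    using col_lt3[OF assms(1) QK_in[OF that]] by simp
  have colC: "kc j t < 3" if "j < 4" "t < 5" for j t
    using col_lt3[OF assms(1) QC_in[OF that]] by (simp add: kc_def)
  have ex: "\<exists>t<4. c QW (QK t) = i" if "i < 3" for i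
  proof -
    have "i \<in> {c QW (QK i) | i. i < 4}" using assms(2) that by (auto simp: lt3)
    then show ?thesis by blast
  qed
  have Ksum: "K 0 + K 1 + K 2 = 4" unfolding K_def by (rule kl_count) (simp_all add: colK)
  have K1: "1 \<le> K i" if "i < 3" for i using ex[OF that] kl_nonempty unfolding K_def by blast
  have cq: "cliq c i (LL c i e)" for i e using LL_cliq[of c, OF assms(3)] .
  have R: "K i + C i 0 + C i 1 + C i 2 + C i 3 \<le> 5" if "i < 3" for i
    using ramsey_app[OF assms(1) nm that cq[of i 4]] by (simp add: LL_len K_def C_def kc_def)
  have G: "length (LL c i j) \<le> 2" if "i < 3" "j < 4" "F i j" for i j
    using graham_app[OF assms(1) nm that(1) cq[of i j] that(2)] that(3) LL_part
    by (simp add: F_def kc_def)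
  have R0: "K i + C i 1 + C i 2 + C i 3 \<le> 2" if "i < 3" "F i 0" for i
    using G[of i 0] that by (simp add: LL_len K_def C_def kc_def)
  have R1: "K i + C i 0 + C i 2 + C i 3 \<le> 2" if "i < 3" "F i 1" for i
    using G[of i 1] that by (simp add: LL_len K_def C_def kc_def)
  have R2: "K i + C i 0 + C i 1 + C i 3 \<le> 2" if "i < 3" "F i 2" for i
    using G[of i 2] that by (simp add: LL_len K_def C_def kc_def)
  have R3: "K i + C i 0 + C i 1 + C i 2 \<le> 2" if "i < 3" "F i 3" for i
    using G[of i 3] that by (simp add: LL_len K_def C_def kc_def)
  have FF: "C i j = 2" if "F i j" for i j
    using cpick_full that unfolding C_def F_def by blast
  have CC: "(\<exists>i<3. F i j) \<or> 3 \<le> C 0 j + C 1 j + C 2 j" if "j < 4" for j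
    using cpick_count[of "kc j"] colC[OF that] unfolding C_def F_def by blast
  show False by (rule arith_core[of K C F, OF Ksum K1 R R0 R1 R2 R3 FF CC])
qed

end
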